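(* Let $X$, $Y$ be disjoint sets of cardinality at least two, $T$ the $(|X|,|Y|)$-biregular tree, and $c, c'$ legal colourings of $X$ and $Y$. If $v,v'\in VT$ are at even distance, then there exists $\sigma\in\mathrm{Sym}(X\cup Y)$ with $\sigma(X)=X$ satisfying $\sigma(c'(\overline{A}(v'))) = c(\overline{A}(v))$, and for every such $\sigma$ there exists a unique automorphism $g\in\mathrm{Aut}(T)$ with $gV_X=V_X$ such that $gv=v'$ and $c = \sigma\circ c'\circ g$ (as maps $AT\to X\cup Y$).
   Context: $T$ has natural bipartition $VT=V_X\sqcup V_Y$ (vertices in $V_X$ have valency $|X|$, in $V_Y$ valency $|Y|$). $A(v)$, $\overline{A}(v)$ are the sets of arcs (ordered pairs of adjacent vertices) with origin, resp. terminus, $v$; automorphisms act on arcs in the natural way. A legal colouring is a map $c:AT\to X\cup Y$ restricting to a bijection $A(v)\to X$ for $v\in V_X$, to a bijection $A(v)\to Y$ for $v\in V_Y$, and constant on each $\overline{A}(v)$; $c(\overline{A}(v))$ denotes this constant value. *)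

theory Defs
  imports Main "HOL-Library.Equipollence"
begin

definition arcs :: "('v \<Rightarrow> 'v \<Rightarrow> bool) \<Rightarrow> ('v \<times> 'v) set" where
  "arcs E = {(u, w). E u w}"

definition out_arcs :: "('v \<Rightarrow> 'v \<Rightarrow> bool) \<Rightarrow> 'v \<Rightarrow> ('v \<times> 'v) set" where
  "out_arcs E v = {(v, w) | w. E v w}"

definition in_arcs :: "('v \<Rightarrow> 'v \<Rightarrow> bool) \<Rightarrow> 'v \<Rightarrow> ('v \<times> 'v) set" where
  "in_arcs E v = {(u, v) | u. E u v}"

definition walk :: "('v \<Rightarrow> 'v \<Rightarrow> bool) \<Rightarrow> 'v list \<Rightarrow> bool" where
  "walk E xs \<longleftrightarrow> xs \<noteq> [] \<and> (\<forall>i. Suc i < length xs \<longrightarrow> E (xs ! i) (xs ! Suc i))"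

definition is_cycle :: "('v \<Rightarrow> 'v \<Rightarrow> bool) \<Rightarrow> 'v list \<Rightarrow> bool" where
  "is_cycle E xs \<longleftrightarrow> length xs \<ge> 3 \<and> distinct xs \<and>
     (\<forall>i < length xs. E (xs ! i) (xs ! ((i + 1) mod length xs)))"

definition is_tree :: "('v \<Rightarrow> 'v \<Rightarrow> bool) \<Rightarrow> bool" where
  "is_tree E \<longleftrightarrow> (\<forall>u w. E u w \<longrightarrow> E w u) \<and> (\<forall>u. \<not> E u u) \<and>
     (\<forall>u w. \<exists>xs. walk E xs \<and> hd xs = u \<and> last xs = w) \<and>
     (\<nexists>xs. is_cycle E xs)"

definition tree_dist :: "('v \<Rightarrow> 'v \<Rightarrow> bool) \<Rightarrow> 'v \<Rightarrow> 'v \<Rightarrow> nat" where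
  "tree_dist E u w = (LEAST n. \<exists>xs. walk E xs \<and> hd xs = u \<and> last xs = w \<and> length xs = Suc n)"

(* T (on the whole vertex type) is the (|X|,|Y|)-biregular tree with bipartition
   VT = VX \<union> (UNIV - VX): vertices in VX have valency |X|, the others valency |Y|. *)
definition biregular_tree ::
  "('v \<Rightarrow> 'v \<Rightarrow> bool) \<Rightarrow> 'v set \<Rightarrow> 'c set \<Rightarrow> 'c set \<Rightarrow> bool" where
  "biregular_tree E VX X Y \<longleftrightarrow> is_tree E \<and>
     (\<forall>u w. E u w \<longrightarrow> (u \<in> VX \<longleftrightarrow> w \<notin> VX)) \<and>
     (\<forall>v \<in> VX. {w. E v w} \<approx> X) \<and>
     (\<forall>v. v \<notin> VX \<longrightarrow> {w. E v w} \<approx> Y)"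

definition legal_colouring ::
  "('v \<Rightarrow> 'v \<Rightarrow> bool) \<Rightarrow> 'v set \<Rightarrow> 'c set \<Rightarrow> 'c set \<Rightarrow> ('v \<times> 'v \<Rightarrow> 'c) \<Rightarrow> bool" where
  "legal_colouring E VX X Y c \<longleftrightarrow>
     (\<forall>v \<in> VX. bij_betw c (out_arcs E v) X) \<and>
     (\<forall>v. v \<notin> VX \<longrightarrow> bij_betw c (out_arcs E v) Y) \<and>
     (\<forall>v. \<forall>a \<in> in_arcs E v. \<forall>b \<in> in_arcs E v. c a = c b)"

(* c(\<overline>A(v)): the constant value of c on the arcs with terminus v *)
definition in_colour :: "('v \<Rightarrow> 'v \<Rightarrow> bool) \<Rightarrow> ('v \<times> 'v \<Rightarrow> 'c) \<Rightarrow> 'v \<Rightarrow> 'c" where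
  "in_colour E c v = the_elem (c ` in_arcs E v)"

definition tree_aut :: "('v \<Rightarrow> 'v \<Rightarrow> bool) \<Rightarrow> ('v \<Rightarrow> 'v) \<Rightarrow> bool" where
  "tree_aut E g \<longleftrightarrow> bij g \<and> (\<forall>u w. E u w \<longleftrightarrow> E (g u) (g w))"

end

theory Submission
  imports Defs
begin


lemma walk_single[simp]: "walk E [x]" by (simp add: walk_def)

lemma walk_snoc: "walk E xs \<Longrightarrow> E (last xs) y \<Longrightarrow> walk E (xs @ [y])"
  unfolding walk_def
  apply (auto simp: nth_append)
  by (metis Suc_lessI diff_Suc_1 last_conv_nth)

lemma walk_take: "walk E xs \<Longrightarrow> 0 < n \<Longrightarrow> walk E (take n xs)"
  unfolding walk_def by auto

lemma walk_nth_induct: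
  assumes "walk E xs" "P (hd xs)" "\<And>p q. P p \<Longrightarrow> E p q \<Longrightarrow> P q"
  shows "\<forall>i<length xs. P (xs ! i)"
proof (intro allI impI)
  fix i assume "i < length xs" thus "P (xs ! i)"
  proof (induction i)
    case 0 thus ?case using assms(1,2) by (simp add: walk_def hd_conv_nth)
  next
    case (Suc i) thus ?case using assms(1,3) unfolding walk_def by auto
  qed
qed

lemma walk_induct:
  assumes "walk E xs" "P (hd xs)" "\<And>p q. P p \<Longrightarrow> E p q \<Longrightarrow> P q"
  shows "P (last xs)"
proof -
  have "xs \<noteq> []" using assms(1) by (simp add: walk_def)
  thus ?thesis using walk_nth_induct[of E xs P, OF assms] by (simp add: last_conv_nth)
qed

locale btree =
  fixes E :: "'v \<Rightarrow> 'v \<Rightarrow> bool" and VX :: "'v set" and X Y :: "'c set"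
  assumes bt: "biregular_tree E VX X Y" and Xne: "X \<noteq> {}" and Yne: "Y \<noteq> {}"
begin

lemma sym: "E u w \<Longrightarrow> E w u" using bt by (auto simp: biregular_tree_def is_tree_def)
lemma irrefl: "\<not> E u u" using bt by (auto simp: biregular_tree_def is_tree_def)
lemma conn: "\<exists>xs. walk E xs \<and> hd xs = u \<and> last xs = w"
  using bt by (auto simp: biregular_tree_def is_tree_def)
lemma nocycle: "\<not> is_cycle E xs" using bt by (auto simp: biregular_tree_def is_tree_def)
lemma side: "E u w \<Longrightarrow> (u \<in> VX \<longleftrightarrow> w \<notin> VX)" using bt by (auto simp: biregular_tree_def)

lemma nbr: "\<exists>w. E u w"
proof (cases "u \<in> VX")
  case True
  hence "{w. E u w} \<approx> X" using bt by (auto simp: biregular_tree_def)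
  thus ?thesis using Xne by (metis Collect_empty_eq eqpoll_empty_iff_empty eqpoll_sym)
next
  case False
  hence "{w. E u w} \<approx> Y" using bt by (auto simp: biregular_tree_def)
  thus ?thesis using Yne by (metis Collect_empty_eq eqpoll_empty_iff_empty eqpoll_sym)
qed

lemma conn_induct:
  assumes "P a" "\<And>p q. P p \<Longrightarrow> E p q \<Longrightarrow> P q"
  shows "P u"
proof -
  obtain xs where "walk E xs" "hd xs = a" "last xs = u" using conn by blast
  thus ?thesis using walk_induct[of E xs P] assms by auto
qed

lemma walk_parity:
  assumes "walk E xs"
  shows "\<forall>i<length xs. ((xs!i \<in> VX \<longleftrightarrow> hd xs \<in> VX) \<longleftrightarrow> even i)"
proof (intro allI impI)
  fix i assume "i < length xs" thus "((xs!i \<in> VX \<longleftrightarrow> hd xs \<in> VX) \<longleftrightarrow> even i)"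
  proof (induction i)
    case 0 thus ?case using assms by (simp add: walk_def hd_conv_nth)
  next
    case (Suc i)
    hence "E (xs!i) (xs!Suc i)" using assms unfolding walk_def by auto
    thus ?case using Suc side by auto
  qed
qed

abbreviation d where "d \<equiv> tree_dist E"

lemma dist_walk: "\<exists>xs. walk E xs \<and> hd xs = u \<and> last xs = w \<and> length xs = Suc (d u w)"
proof -
  obtain xs where xs: "walk E xs" "hd xs = u" "last xs = w" using conn by blast
  hence "length xs = Suc (length xs - 1)" by (cases xs) (auto simp: walk_def)
  hence "\<exists>n xs. walk E xs \<and> hd xs = u \<and> last xs = w \<and> length xs = Suc n" using xs by blast
  from LeastI_ex[OF this] show ?thesis unfolding tree_dist_def .
qed

lemma dist_le: assumes "walk E xs" "hd xs = u" "last xs = w" shows "d u w \<le> length xs - 1"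
proof -
  have "length xs = Suc (length xs - 1)" using assms(1) by (cases xs) (auto simp: walk_def)
  hence "\<exists>xs'. walk E xs' \<and> hd xs' = u \<and> last xs' = w \<and> length xs' = Suc (length xs - 1)"
    using assms by metis
  thus ?thesis unfolding tree_dist_def by (rule Least_le)
qed

lemma dist_parity: "(w \<in> VX \<longleftrightarrow> u \<in> VX) \<longleftrightarrow> even (d u w)"
proof -
  obtain xs where xs: "walk E xs" "hd xs = u" "last xs = w" "length xs = Suc (d u w)"
    using dist_walk by blast
  have "xs \<noteq> []" using xs by auto
  hence "last xs = xs ! d u w" using xs by (simp add: last_conv_nth)
  thus ?thesis using walk_parity[OF xs(1)] xs by auto
qed

lemma dist_step: "E a b \<Longrightarrow> d u b \<le> d u a + 1"
proof -
  assume e: "E a b"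
  obtain xs where xs: "walk E xs" "hd xs = u" "last xs = a" "length xs = Suc (d u a)"
    using dist_walk by blast
  have "walk E (xs @ [b])" using walk_snoc xs e by metis
  moreover have "hd (xs @ [b]) = u" using xs by (cases xs) auto
  ultimately have "d u b \<le> length (xs @ [b]) - 1" using dist_le by fastforce
  thus ?thesis using xs by simp
qed

lemma dist_adj: "E a b \<Longrightarrow> d u b = d u a + 1 \<or> d u a = d u b + 1"
proof -
  assume e: "E a b"
  have "d u b \<le> d u a + 1" "d u a \<le> d u b + 1" using dist_step e sym by blast+
  moreover have "d u a \<noteq> d u b" using dist_parity[of a u] dist_parity[of b u] side[OF e] by auto
  ultimately show ?thesis by linarith
qed

lemma dist_zero: "d u w = 0 \<Longrightarrow> w = u"
  using dist_walk[of u w] by (auto simp: length_Suc_conv)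


lemma geo:
  assumes w: "walk E xs" "hd xs = r" "length xs = Suc (d r (last xs))" and i: "i < length xs"
  shows "d r (xs!i) = i"
proof -
  have ne: "xs \<noteq> []" using w by (auto simp: walk_def)
  have "walk E (take (Suc i) xs)" using walk_take w by blast
  moreover have "hd (take (Suc i) xs) = r" using w ne by (cases xs) auto
  moreover have "last (take (Suc i) xs) = xs ! i" using i by (simp add: take_Suc_conv_app_nth)
  ultimately have le: "d r (xs!i) \<le> i" using dist_le[of "take (Suc i) xs"] i by fastforce
  have ind: "\<forall>l. i + l < length xs \<longrightarrow> d r (xs!(i+l)) \<le> d r (xs!i) + l"
  proof
    fix l show "i + l < length xs \<longrightarrow> d r (xs!(i+l)) \<le> d r (xs!i) + l"
    proof (induction l)
      case 0 thus ?case by simp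
    next
      case (Suc l)
      show ?case
      proof
        assume a: "i + Suc l < length xs"
        hence "E (xs!(i+l)) (xs!(i + Suc l))" using w(1) unfolding walk_def by auto
        hence "d r (xs!(i + Suc l)) \<le> d r (xs!(i+l)) + 1" by (rule dist_step)
        thus "d r (xs!(i + Suc l)) \<le> d r (xs!i) + Suc l" using Suc a by auto
      qed
    qed
  qed
  have e1: "i + (length xs - 1 - i) < length xs" using i by auto
  have e2: "xs ! (i + (length xs - 1 - i)) = last xs" using ne i by (simp add: last_conv_nth)
  have "d r (last xs) \<le> d r (xs!i) + (length xs - 1 - i)" using ind e1 e2 by metis
  thus ?thesis using le w(3) i by linarith
qed

lemma parent_ex: "d r u = Suc n \<Longrightarrow> \<exists>p. E p u \<and> d r p = n"
proof -
  assume du: "d r u = Suc n"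
  obtain xs where xs: "walk E xs" "hd xs = r" "last xs = u" "length xs = Suc (d r u)"
    using dist_walk by blast
  have ne: "xs \<noteq> []" using xs by (auto simp: walk_def)
  have "E (xs!n) (xs!Suc n)" using xs(1,4) du unfolding walk_def by auto
  moreover have "xs ! Suc n = u" using xs ne du by (simp add: last_conv_nth)
  moreover have "d r (xs!n) = n" using geo[of xs r n] xs du by auto
  ultimately show ?thesis by metis
qed

lemma parent_uniq:
  assumes pu: "E p u" and qu: "E q u" and dp: "d r p = k" and dq: "d r q = k" and du: "d r u = Suc k"
  shows "p = q"
proof (rule ccontr)
  assume pq: "p \<noteq> q"
  obtain P where P: "walk E P" "hd P = r" "last P = p" "length P = Suc (d r p)"
    using dist_walk by blast
  obtain Q where Q: "walk E Q" "hd Q = r" "last Q = q" "length Q = Suc (d r q)"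
    using dist_walk by blast
  have Pne: "P \<noteq> []" and Qne: "Q \<noteq> []" using P Q by auto
  have gP: "\<And>i. i \<le> k \<Longrightarrow> d r (P!i) = i" using geo[of P r] P dp by auto
  have gQ: "\<And>i. i \<le> k \<Longrightarrow> d r (Q!i) = i" using geo[of Q r] Q dq by auto
  have Pk: "P!k = p" using P Pne dp by (simp add: last_conv_nth)
  have Qk: "Q!k = q" using Q Qne dq by (simp add: last_conv_nth)
  have EP: "\<And>i. i < k \<Longrightarrow> E (P!i) (P!Suc i)" using P dp unfolding walk_def by auto
  have EQ: "\<And>i. i < k \<Longrightarrow> E (Q!i) (Q!Suc i)" using Q dq unfolding walk_def by auto
  define J where "J = {i. i \<le> k \<and> P!i = Q!i}"
  have finJ: "finite J" unfolding J_def by auto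
  have "0 \<in> J" unfolding J_def using P Q Pne Qne by (simp add: hd_conv_nth)
  define j where "j = Max J"
  have jJ: "j \<in> J" unfolding j_def using finJ \<open>0 \<in> J\<close> Max_in by blast
  have jmax: "\<And>i. i \<le> k \<Longrightarrow> j < i \<Longrightarrow> P!i \<noteq> Q!i"
    using Max_ge[OF finJ] unfolding j_def J_def by fastforce
  have jk: "j < k" using jJ pq Pk Qk unfolding J_def by (cases "j = k") auto
  define m where "m = k - j"
  have m1: "m \<ge> 1" and km: "k = j + m" using jk unfolding m_def by auto
  define L where "L = 2*m+2"
  define f where "f i = (if i \<le> m then P!(j+i) else if i = m+1 then u else Q!(j+2*m+2-i))" for i
  define \<delta> where "\<delta> i = (if i \<le> m+1 then j+i else j+2*m+2-i)" for i
  have df: "\<And>i. i < L \<Longrightarrow> d r (f i) = \<delta> i"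
  proof -
    fix i assume "i < L"
    thus "d r (f i) = \<delta> i" unfolding f_def \<delta>_def L_def
      using gP[of "j+i"] gQ[of "j+2*m+2-i"] du km by auto
  qed
  have dist: "distinct (map f [0..<L])"
  proof (subst distinct_conv_nth, intro allI impI)
    fix a b assume a: "a < length (map f [0..<L])" and b: "b < length (map f [0..<L])" and ab: "a \<noteq> b"
    show "map f [0..<L] ! a \<noteq> map f [0..<L] ! b"
    proof
      assume eq: "map f [0..<L] ! a = map f [0..<L] ! b"
      have aL: "a < L" and bL: "b < L" using a b by auto
      have fe: "f a = f b" using eq aL bL by simp
      hence de: "\<delta> a = \<delta> b" using df aL bL by metis
      { fix a b assume aL: "a < L" and bL: "b < L" and ab: "a < b" and fe: "f a = f b" and de: "\<delta> a = \<delta> b"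
        have "a \<le> m+1 \<and> m+2 \<le> b" using de ab aL bL unfolding \<delta>_def L_def by (auto split: if_splits)
        hence a2: "a = 2*m+2-b" "a \<le> m" "1 \<le> a" using de bL unfolding \<delta>_def L_def by (auto split: if_splits)
        hence "f a = P!(j+a)" "f b = Q!(j+a)" using \<open>a \<le> m+1 \<and> m+2 \<le> b\<close> bL unfolding f_def L_def by auto
        hence False using jmax[of "j+a"] fe a2 km by auto }
      thus False using aL bL ab fe de by (metis linorder_neqE_nat)
    qed
  qed
  have adj: "\<And>i. i < L \<Longrightarrow> E (f i) (f ((i+1) mod L))"
  proof -
    fix i assume iL: "i < L"
    consider "i < m" | "i = m" | "i = m+1" | "m+2 \<le> i \<and> i \<le> 2*m" | "i = 2*m+1"
      using iL unfolding L_def by linarith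
    thus "E (f i) (f ((i+1) mod L))"
    proof cases
      case 1 thus ?thesis using EP[of "j+i"] km iL unfolding f_def L_def by auto
    next
      case 2 thus ?thesis using pu Pk km unfolding f_def L_def by auto
    next
      case 3
      have "f (m+2) = q" using Qk km unfolding f_def by (auto simp: add.commute)
      moreover have "(i+1) mod L = m+2" using 3 m1 unfolding L_def by auto
      moreover have "f i = u" using 3 unfolding f_def by auto
      ultimately show ?thesis using qu sym by metis
    next
      case 4
      have e: "E (Q!(j+2*m+1-i)) (Q!Suc (j+2*m+1-i))" using EQ[of "j+2*m+1-i"] 4 km by auto
      have "Suc (j+2*m+1-i) = j+2*m+2-i" using 4 by auto
      hence "E (Q!(j+2*m+2-i)) (Q!(j+2*m+1-i))" using e sym by metis
      moreover have "(i+1) mod L = i+1" using 4 unfolding L_def by auto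
      moreover have "f i = Q!(j+2*m+2-i)" "f (i+1) = Q!(j+2*m+1-i)" using 4 unfolding f_def by auto
      ultimately show ?thesis by simp
    next
      case 5
      have "(i+1) mod L = 0" using 5 unfolding L_def by auto
      moreover have "f 0 = Q!j" using jJ unfolding f_def J_def by auto
      moreover have "f i = Q!(Suc j)" using 5 m1 unfolding f_def by auto
      ultimately show ?thesis using EQ[of j] jk sym by metis
    qed
  qed
  have "is_cycle E (map f [0..<L])"
    unfolding is_cycle_def
  proof (intro conjI allI impI)
    show "3 \<le> length (map f [0..<L])" using m1 unfolding L_def by simp
    show "distinct (map f [0..<L])" by (rule dist)
    fix i assume "i < length (map f [0..<L])"
    hence iL: "i < L" by simp
    have "(i+1) mod L < L" using iL by simp
    thus "E (map f [0..<L] ! i) (map f [0..<L] ! ((i + 1) mod length (map f [0..<L])))"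
      using adj[OF iL] iL by simp
  qed
  thus False using nocycle by blast
qed

end

context btree begin

lemma col_val: "legal_colouring E VX X Y c \<Longrightarrow> E x y \<Longrightarrow> c (x,y) \<in> (if x \<in> VX then X else Y)"
  unfolding legal_colouring_def out_arcs_def bij_betw_def by auto

lemma col_inj: "legal_colouring E VX X Y c \<Longrightarrow> E x y \<Longrightarrow> E x z \<Longrightarrow> c (x,y) = c (x,z) \<Longrightarrow> y = z"
proof -
  assume l: "legal_colouring E VX X Y c" and e: "E x y" "E x z" "c (x,y) = c (x,z)"
  have "inj_on c (out_arcs E x)" using l unfolding legal_colouring_def bij_betw_def by (cases "x \<in> VX") auto
  moreover have "(x,y) \<in> out_arcs E x" "(x,z) \<in> out_arcs E x" using e by (auto simp: out_arcs_def)
  ultimately show "y = z" using e(3) inj_onD by fastforce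
qed

lemma col_surj: "legal_colouring E VX X Y c \<Longrightarrow> col \<in> (if x \<in> VX then X else Y) \<Longrightarrow> \<exists>y. E x y \<and> c (x,y) = col"
proof -
  assume l: "legal_colouring E VX X Y c" and col: "col \<in> (if x \<in> VX then X else Y)"
  have "c ` out_arcs E x = (if x \<in> VX then X else Y)" using l unfolding legal_colouring_def bij_betw_def by (cases "x \<in> VX") auto
  hence "col \<in> c ` out_arcs E x" using col by simp
  then obtain a where "col = c a" "a \<in> out_arcs E x" by (rule imageE)
  thus ?thesis by (auto simp: out_arcs_def)
qed

lemma in_col: "legal_colouring E VX X Y c \<Longrightarrow> E w u \<Longrightarrow> in_colour E c u = c (w,u)"
proof -
  assume l: "legal_colouring E VX X Y c" and e: "E w u"
  have w: "(w,u) \<in> in_arcs E u" using e by (auto simp: in_arcs_def)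
  have "c ` in_arcs E u = {c (w,u)}"
  proof
    show "c ` in_arcs E u \<subseteq> {c (w,u)}" using l w unfolding legal_colouring_def by blast
    show "{c (w,u)} \<subseteq> c ` in_arcs E u" using w by blast
  qed
  thus ?thesis unfolding in_colour_def by simp
qed

lemma construct:
  assumes lc: "legal_colouring E VX X Y c" and lc': "legal_colouring E VX X Y c'"
    and disj: "X \<inter> Y = {}" and sb: "bij_betw \<sigma> (X \<union> Y) (X \<union> Y)" and sX: "\<sigma> ` X = X"
    and root: "\<sigma> (in_colour E c' v') = in_colour E c v" and same: "v \<in> VX \<longleftrightarrow> v' \<in> VX"
  shows "\<exists>g. g v = v' \<and> (\<forall>u w. E u w \<longrightarrow> E (g u) (g w) \<and> c (u,w) = \<sigma> (c' (g u, g w)))"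
proof -
  have inj: "inj_on \<sigma> (X \<union> Y)" using sb by (simp add: bij_betw_def)
  have sU: "\<sigma> ` (X \<union> Y) = X \<union> Y" using sb by (simp add: bij_betw_def)
  have sY: "\<sigma> ` Y = Y"
  proof -
    have "\<sigma> ` Y = \<sigma> ` ((X \<union> Y) - X)" using disj by blast
    also have "\<dots> = \<sigma> ` (X \<union> Y) - \<sigma> ` X" using inj by (simp add: inj_on_image_set_diff)
    also have "\<dots> = Y" using sU sX disj by auto
    finally show ?thesis .
  qed
  have nb_ex: "\<exists>!y. E x y \<and> \<sigma> (c' (x,y)) = c (u,w)" if xu: "x \<in> VX \<longleftrightarrow> u \<in> VX" and e: "E u w" for x u w
  proof (rule ex_ex1I)
    have cv: "c (u,w) \<in> (if x \<in> VX then X else Y)" using col_val[OF lc e] xu by simp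
    have "\<sigma> ` (if x \<in> VX then X else Y) = (if x \<in> VX then X else Y)" using sX sY by simp
    hence "c (u,w) \<in> \<sigma> ` (if x \<in> VX then X else Y)" using cv by simp
    then obtain col where col0: "c (u,w) = \<sigma> col" "col \<in> (if x \<in> VX then X else Y)" by (rule imageE)
    hence col: "col \<in> (if x \<in> VX then X else Y)" "\<sigma> col = c (u,w)" by simp_all
    then obtain y where "E x y" "c' (x,y) = col" using col_surj[OF lc'] by blast
    thus "\<exists>y. E x y \<and> \<sigma> (c' (x,y)) = c (u,w)" using col by blast
  next
    fix y1 y2 assume a: "E x y1 \<and> \<sigma> (c' (x,y1)) = c (u,w)" "E x y2 \<and> \<sigma> (c' (x,y2)) = c (u,w)"
    have m: "c' (x,y1) \<in> X \<union> Y" "c' (x,y2) \<in> X \<union> Y"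
      using col_val[OF lc' conjunct1[OF a(1)]] col_val[OF lc' conjunct1[OF a(2)]] by (auto split: if_splits)
    have "\<sigma> (c' (x,y1)) = \<sigma> (c' (x,y2))" using a by simp
    hence "c' (x,y1) = c' (x,y2)" using inj_onD[OF inj _ m] by blast
    thus "y1 = y2" using col_inj[OF lc'] a by blast
  qed
  define par where "par u = (SOME p. E p u \<and> d v p + 1 = d v u)" for u
  define nb where "nb x col = (THE y. E x y \<and> \<sigma> (c' (x,y)) = col)" for x col
  define gl where "gl = rec_nat (\<lambda>u. v') (\<lambda>n G u. nb (G (par u)) (c (par u, u)))"
  define g where "g u = gl (d v u) u" for u
  have par: "E (par u) u \<and> d v (par u) = n" if "d v u = Suc n" for u n
  proof -
    have "\<exists>p. E p u \<and> d v p + 1 = d v u" using parent_ex[OF that] that by auto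
    from someI_ex[OF this] show ?thesis using that unfolding par_def by simp
  qed
  have gv: "g v = v'"
  proof -
    have "d v v = 0" using dist_le[of "[v]" v v] by simp
    thus ?thesis unfolding g_def gl_def by simp
  qed
  have gsuc: "g u = nb (g (par u)) (c (par u, u))" if "d v u = Suc n" for u n
    using that par[OF that] unfolding g_def gl_def by simp
  have inv: "\<forall>u. d v u = n \<longrightarrow> (g u \<in> VX \<longleftrightarrow> u \<in> VX) \<and> \<sigma> (in_colour E c' (g u)) = in_colour E c u" for n
  proof (induction n)
    case 0 thus ?case using dist_zero gv same root by auto
  next
    case (Suc n)
    show ?case
    proof (intro allI impI)
      fix u assume du: "d v u = Suc n"
      define p where "p = par u"
      have pu: "E p u" "d v p = n" using par[OF du] unfolding p_def by auto
      have IH: "(g p \<in> VX \<longleftrightarrow> p \<in> VX)" "\<sigma> (in_colour E c' (g p)) = in_colour E c p" using Suc pu by auto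
      have ex: "\<exists>!y. E (g p) y \<and> \<sigma> (c' (g p,y)) = c (p,u)" using nb_ex IH(1) pu(1) by blast
      have gu: "g u = nb (g p) (c (p,u))" using gsuc[OF du] unfolding p_def .
      have pr: "E (g p) (g u) \<and> \<sigma> (c' (g p, g u)) = c (p,u)" unfolding gu nb_def using theI'[OF ex] .
      have "g u \<in> VX \<longleftrightarrow> g p \<notin> VX" using side[OF conjunct1[OF pr]] by simp
      hence "g u \<in> VX \<longleftrightarrow> u \<in> VX" using side[OF pu(1)] IH(1) by simp
      moreover have "\<sigma> (in_colour E c' (g u)) = in_colour E c u"
        using in_col[OF lc' conjunct1[OF pr]] in_col[OF lc pu(1)] pr by simp
      ultimately show "(g u \<in> VX \<longleftrightarrow> u \<in> VX) \<and> \<sigma> (in_colour E c' (g u)) = in_colour E c u" ..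
    qed
  qed
  have pedge: "E (g (par u)) (g u) \<and> \<sigma> (c' (g (par u), g u)) = c (par u, u)" if du: "d v u = Suc n" for u n
  proof -
    define p where "p = par u"
    have pu: "E p u" "d v p = n" using par[OF du] unfolding p_def by auto
    have IH: "(g p \<in> VX \<longleftrightarrow> p \<in> VX)" using inv pu by auto
    have ex: "\<exists>!y. E (g p) y \<and> \<sigma> (c' (g p,y)) = c (p,u)" using nb_ex IH(1) pu(1) by blast
    have gu: "g u = nb (g p) (c (p,u))" using gsuc[OF du] unfolding p_def .
    show ?thesis unfolding gu p_def[symmetric] nb_def using theI'[OF ex] .
  qed
  have edge: "E (g u) (g w) \<and> c (u,w) = \<sigma> (c' (g u, g w))" if e: "E u w" for u w
  proof (cases "d v w = Suc (d v u)")
    case True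
    have "E (par w) w" "d v (par w) = d v u" using par[OF True] by auto
    hence "par w = u" using parent_uniq[OF _ e _ _ True] by blast
    thus ?thesis using pedge[OF True] by simp
  next
    case False
    hence du: "d v u = Suc (d v w)" using dist_adj[OF e, of v] by auto
    have "E (par u) u" "d v (par u) = d v w" using par[OF du] by auto
    hence pw: "par u = w" using parent_uniq[OF _ sym[OF e] _ _ du] by blast
    hence ed: "E (g u) (g w)" using pedge[OF du] sym by auto
    have "c (u,w) = in_colour E c w" using in_col[OF lc e] by simp
    also have "\<dots> = \<sigma> (in_colour E c' (g w))" using inv by auto
    also have "\<dots> = \<sigma> (c' (g u, g w))" using in_col[OF lc' ed] by simp
    finally show ?thesis using ed by simp
  qed
  show ?thesis using gv edge by blast
qed

end

context btree begin

lemma uniq: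
  assumes lc: "legal_colouring E VX X Y c" and lc': "legal_colouring E VX X Y c'"
    and inj: "inj_on \<sigma> (X \<union> Y)" and g12: "g1 v = g2 v"
    and h1: "\<forall>u w. E u w \<longrightarrow> E (g1 u) (g1 w) \<and> c (u,w) = \<sigma> (c' (g1 u, g1 w))"
    and h2: "\<forall>u w. E u w \<longrightarrow> E (g2 u) (g2 w) \<and> c (u,w) = \<sigma> (c' (g2 u, g2 w))"
  shows "g1 = g2"
proof
  fix u show "g1 u = g2 u"
  proof (rule conn_induct[of "\<lambda>u. g1 u = g2 u" v])
    show "g1 v = g2 v" by (rule g12)
  next
    fix p q assume pq: "g1 p = g2 p" "E p q"
    have e1: "E (g1 p) (g1 q)" and c1: "c (p,q) = \<sigma> (c' (g1 p, g1 q))" using h1 pq(2) by auto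
    have e2: "E (g1 p) (g2 q)" and c2: "c (p,q) = \<sigma> (c' (g1 p, g2 q))" using h2 pq by auto
    have m: "c' (g1 p, g1 q) \<in> X \<union> Y" "c' (g1 p, g2 q) \<in> X \<union> Y"
      using col_val[OF lc' e1] col_val[OF lc' e2] by (auto split: if_splits)
    have "c' (g1 p, g1 q) = c' (g1 p, g2 q)" using inj_onD[OF inj _ m] c1 c2 by simp
    thus "g1 q = g2 q" using col_inj[OF lc' e1 e2] by simp
  qed
qed

lemma side_pres:
  assumes "g v = v'" "v \<in> VX \<longleftrightarrow> v' \<in> VX" "\<forall>u w. E u w \<longrightarrow> E (g u) (g w)"
  shows "g u \<in> VX \<longleftrightarrow> u \<in> VX"
proof (rule conn_induct[of "\<lambda>u. g u \<in> VX \<longleftrightarrow> u \<in> VX" v])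
  show "g v \<in> VX \<longleftrightarrow> v \<in> VX" using assms by simp
next
  fix p q assume pq: "g p \<in> VX \<longleftrightarrow> p \<in> VX" "E p q"
  have "E (g p) (g q)" using assms(3) pq(2) by blast
  hence "g q \<in> VX \<longleftrightarrow> g p \<notin> VX" using side by blast
  moreover have "q \<in> VX \<longleftrightarrow> p \<notin> VX" using side pq(2) by blast
  ultimately show "g q \<in> VX \<longleftrightarrow> q \<in> VX" using pq(1) by simp
qed

lemma in_col_val: "legal_colouring E VX X Y c \<Longrightarrow> in_colour E c u \<in> (if u \<in> VX then Y else X)"
proof -
  assume lc: "legal_colouring E VX X Y c"
  obtain w where e: "E w u" using nbr sym by blast
  have "in_colour E c u = c (w,u)" using in_col[OF lc e] .
  moreover have "c (w,u) \<in> (if w \<in> VX then X else Y)" using col_val[OF lc e] .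
  moreover have "w \<in> VX \<longleftrightarrow> u \<notin> VX" using side[OF e] .
  ultimately show ?thesis by (auto split: if_splits)
qed

end

lemma swap_facts:
  fixes a b :: 'c
  assumes ab: "a \<in> X \<union> Y" "b \<in> X \<union> Y" and aX: "a \<in> X \<longleftrightarrow> b \<in> X"
  defines "\<sigma> \<equiv> (\<lambda>x. if x = a then b else if x = b then a else x)"
  shows "bij_betw \<sigma> (X \<union> Y) (X \<union> Y) \<and> \<sigma> ` X = X \<and> \<sigma> a = b"
proof (intro conjI)
  have inv: "\<sigma> (\<sigma> x) = x" for x unfolding \<sigma>_def by auto
  have into: "\<sigma> ` (X \<union> Y) \<subseteq> X \<union> Y" using ab unfolding \<sigma>_def by auto
  show "bij_betw \<sigma> (X \<union> Y) (X \<union> Y)" by (rule bij_betw_byWitness[where f'=\<sigma>]) (use inv into in auto)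
  have intoX: "\<sigma> ` X \<subseteq> X" using aX unfolding \<sigma>_def by auto
  show "\<sigma> ` X = X"
  proof
    show "\<sigma> ` X \<subseteq> X" by (rule intoX)
    show "X \<subseteq> \<sigma> ` X"
    proof
      fix x assume "x \<in> X" thus "x \<in> \<sigma> ` X" using intoX inv by (metis image_eqI subsetD)
    qed
  qed
  show "\<sigma> a = b" unfolding \<sigma>_def by simp
qed



theorem lemma3p3:
  fixes E :: "'v \<Rightarrow> 'v \<Rightarrow> bool" and VX :: "'v set"
    and X Y :: "'c set" and c c' :: "'v \<times> 'v \<Rightarrow> 'c" and v v' :: 'v
  assumes "X \<inter> Y = {}"
    and "\<exists>a\<in>X. \<exists>b\<in>X. a \<noteq> b"
    and "\<exists>a\<in>Y. \<exists>b\<in>Y. a \<noteq> b"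
    and "biregular_tree E VX X Y"
    and "legal_colouring E VX X Y c"
    and "legal_colouring E VX X Y c'"
    and "even (tree_dist E v v')"
  shows "(\<exists>\<sigma>. bij_betw \<sigma> (X \<union> Y) (X \<union> Y) \<and> \<sigma> ` X = X \<and>
              \<sigma> (in_colour E c' v') = in_colour E c v) \<and>
         (\<forall>\<sigma>. bij_betw \<sigma> (X \<union> Y) (X \<union> Y) \<and> \<sigma> ` X = X \<and>
              \<sigma> (in_colour E c' v') = in_colour E c v \<longrightarrow>
            (\<exists>!g. tree_aut E g \<and> g ` VX = VX \<and> g v = v' \<and>
                  (\<forall>a \<in> arcs E. c a = \<sigma> (c' (map_prod g g a)))))"
proof -
  have XY: "X \<noteq> {}" "Y \<noteq> {}" using assms(2,3) by auto
  interpret btree E VX X Y using assms(4) XY by unfold_locales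
  have same: "v \<in> VX \<longleftrightarrow> v' \<in> VX" using dist_parity[of v' v] assms(7) by simp
  have lc: "legal_colouring E VX X Y c" and lc': "legal_colouring E VX X Y c'" using assms(5,6) .
  have disj: "X \<inter> Y = {}" using assms(1) .
  show ?thesis
  proof (intro conjI allI impI)
    define a where "a = in_colour E c' v'"
    define b where "b = in_colour E c v"
    have a: "a \<in> (if v \<in> VX then Y else X)" using in_col_val[OF lc', of v'] same unfolding a_def by simp
    have b: "b \<in> (if v \<in> VX then Y else X)" using in_col_val[OF lc, of v] unfolding b_def by simp
    have ab: "a \<in> X \<union> Y" "b \<in> X \<union> Y" using a b by (auto split: if_splits)
    have aX: "a \<in> X \<longleftrightarrow> b \<in> X" using a b disj by (auto split: if_splits)
    show "\<exists>\<sigma>. bij_betw \<sigma> (X \<union> Y) (X \<union> Y) \<and> \<sigma> ` X = X \<and> \<sigma> (in_colour E c' v') = in_colour E c v"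
      using swap_facts[OF ab aX] unfolding a_def b_def by blast
  next
    fix \<sigma> assume s: "bij_betw \<sigma> (X \<union> Y) (X \<union> Y) \<and> \<sigma> ` X = X \<and> \<sigma> (in_colour E c' v') = in_colour E c v"
    have sb: "bij_betw \<sigma> (X \<union> Y) (X \<union> Y)" and sX: "\<sigma> ` X = X" and root: "\<sigma> (in_colour E c' v') = in_colour E c v"
      using s by auto
    have inj: "inj_on \<sigma> (X \<union> Y)" using sb by (simp add: bij_betw_def)
    have sU: "\<sigma> ` (X \<union> Y) = X \<union> Y" using sb by (simp add: bij_betw_def)
    obtain g where g: "g v = v'" "\<forall>u w. E u w \<longrightarrow> E (g u) (g w) \<and> c (u,w) = \<sigma> (c' (g u, g w))"
      using construct[OF lc lc' disj sb sX root same] by blast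
    define \<tau> where "\<tau> = inv_into (X \<union> Y) \<sigma>"
    have tb: "bij_betw \<tau> (X \<union> Y) (X \<union> Y)" unfolding \<tau>_def using bij_betw_inv_into[OF sb] .
    have ts: "\<tau> (\<sigma> x) = x" if "x \<in> X \<union> Y" for x unfolding \<tau>_def using inv_into_f_f[OF inj that] .
    have st: "\<sigma> (\<tau> x) = x" if "x \<in> X \<union> Y" for x unfolding \<tau>_def using f_inv_into_f[of x \<sigma> "X \<union> Y"] that sU by simp
    have tX: "\<tau> ` X = X"
    proof -
      have "\<tau> ` X = \<tau> ` (\<sigma> ` X)" using sX by simp
      also have "\<dots> = (\<lambda>x. \<tau> (\<sigma> x)) ` X" by (simp add: image_image)
      also have "\<dots> = X" using ts by (simp add: image_cong[of X X "\<lambda>x. \<tau> (\<sigma> x)" id])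
      finally show ?thesis .
    qed
    have ac: "in_colour E c' v' \<in> X \<union> Y" using in_col_val[OF lc', of v'] by (auto split: if_splits)
    have troot: "\<tau> (in_colour E c v) = in_colour E c' v'" using root[symmetric] ts[OF ac] by simp
    obtain h where h: "h v' = v" "\<forall>u w. E u w \<longrightarrow> E (h u) (h w) \<and> c' (u,w) = \<tau> (c (h u, h w))"
      using construct[OF lc' lc disj tb tX troot] same by blast
    have cv: "c (x,y) \<in> X \<union> Y" if "E x y" for x y using col_val[OF lc that] by (auto split: if_splits)
    have cv': "c' (x,y) \<in> X \<union> Y" if "E x y" for x y using col_val[OF lc' that] by (auto split: if_splits)
    have hg: "h \<circ> g = id"
    proof (rule uniq[OF lc lc, where \<sigma>=id and v=v])
      show "inj_on id (X \<union> Y)" by simp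
      show "(h \<circ> g) v = id v" using g h by simp
      show "\<forall>u w. E u w \<longrightarrow> E ((h \<circ> g) u) ((h \<circ> g) w) \<and> c (u,w) = id (c ((h \<circ> g) u, (h \<circ> g) w))"
      proof (intro allI impI)
        fix u w assume e: "E u w"
        have e1: "E (g u) (g w)" and c1: "c (u,w) = \<sigma> (c' (g u, g w))" using g e by auto
        have e2: "E (h (g u)) (h (g w))" and c2: "c' (g u, g w) = \<tau> (c (h (g u), h (g w)))" using h e1 by auto
        have "c (u,w) = c (h (g u), h (g w))" using c1 c2 st[OF cv[OF e2]] by simp
        thus "E ((h \<circ> g) u) ((h \<circ> g) w) \<and> c (u,w) = id (c ((h \<circ> g) u, (h \<circ> g) w))" using e2 by simp
      qed
      show "\<forall>u w. E u w \<longrightarrow> E (id u) (id w) \<and> c (u,w) = id (c (id u, id w))" by simp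
    qed
    have gh: "g \<circ> h = id"
    proof (rule uniq[OF lc' lc', where \<sigma>=id and v=v'])
      show "inj_on id (X \<union> Y)" by simp
      show "(g \<circ> h) v' = id v'" using g h by simp
      show "\<forall>u w. E u w \<longrightarrow> E ((g \<circ> h) u) ((g \<circ> h) w) \<and> c' (u,w) = id (c' ((g \<circ> h) u, (g \<circ> h) w))"
      proof (intro allI impI)
        fix u w assume e: "E u w"
        have e1: "E (h u) (h w)" and c1: "c' (u,w) = \<tau> (c (h u, h w))" using h e by auto
        have e2: "E (g (h u)) (g (h w))" and c2: "c (h u, h w) = \<sigma> (c' (g (h u), g (h w)))" using g e1 by auto
        have "c' (u,w) = c' (g (h u), g (h w))" using c1 c2 ts[OF cv'[OF e2]] by simp
        thus "E ((g \<circ> h) u) ((g \<circ> h) w) \<and> c' (u,w) = id (c' ((g \<circ> h) u, (g \<circ> h) w))" using e2 by simp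
      qed
      show "\<forall>u w. E u w \<longrightarrow> E (id u) (id w) \<and> c' (u,w) = id (c' (id u, id w))" by simp
    qed
    have hgx: "h (g x) = x" for x using hg by (metis comp_apply id_apply)
    have ghx: "g (h x) = x" for x using gh by (metis comp_apply id_apply)
    have aut: "tree_aut E g"
      unfolding tree_aut_def
    proof (intro conjI allI)
      show "bij g" using o_bij[OF hg gh] .
      fix u w show "E u w \<longleftrightarrow> E (g u) (g w)"
      proof
        assume "E u w" thus "E (g u) (g w)" using g by blast
      next
        assume "E (g u) (g w)" hence "E (h (g u)) (h (g w))" using h by blast
        thus "E u w" using hgx by simp
      qed
    qed
    have gside: "g u \<in> VX \<longleftrightarrow> u \<in> VX" for u using side_pres[of g v v' u] g same by blast
    have gVX: "g ` VX = VX"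
    proof
      show "g ` VX \<subseteq> VX" using gside by blast
      show "VX \<subseteq> g ` VX"
      proof
        fix x assume x: "x \<in> VX"
        have "h x \<in> VX" using gside[of "h x"] ghx x by simp
        thus "x \<in> g ` VX" using ghx by (metis image_eqI)
      qed
    qed
    have gcol: "\<forall>a \<in> arcs E. c a = \<sigma> (c' (map_prod g g a))"
      unfolding arcs_def using g by auto
    show "\<exists>!g. tree_aut E g \<and> g ` VX = VX \<and> g v = v' \<and> (\<forall>a \<in> arcs E. c a = \<sigma> (c' (map_prod g g a)))"
    proof (rule ex1I[of _ g])
      show "tree_aut E g \<and> g ` VX = VX \<and> g v = v' \<and> (\<forall>a \<in> arcs E. c a = \<sigma> (c' (map_prod g g a)))"
        using aut gVX g gcol by blast
    next
      fix g2 assume g2: "tree_aut E g2 \<and> g2 ` VX = VX \<and> g2 v = v' \<and> (\<forall>a \<in> arcs E. c a = \<sigma> (c' (map_prod g2 g2 a)))"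
      have "\<forall>u w. E u w \<longrightarrow> E (g2 u) (g2 w) \<and> c (u,w) = \<sigma> (c' (g2 u, g2 w))"
      proof (intro allI impI)
        fix u w assume e: "E u w"
        have "E (g2 u) (g2 w)" using g2 e unfolding tree_aut_def by blast
        moreover have "(u,w) \<in> arcs E" using e by (simp add: arcs_def)
        ultimately show "E (g2 u) (g2 w) \<and> c (u,w) = \<sigma> (c' (g2 u, g2 w))" using g2 by fastforce
      qed
      hence h2: "\<forall>u w. E u w \<longrightarrow> E (g2 u) (g2 w) \<and> c (u,w) = \<sigma> (c' (g2 u, g2 w))" .
      have v2: "g2 v = g v" using g2 g by simp
      show "g2 = g" by (rule uniq[OF lc lc' inj v2 h2 g(2)])
    qed
  qed
qed

end
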